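(* Let $p$ be a prime, let $e\geq2$ and $d\geq2$ be integers, and let $\mathcal P(p^e,d)\subset\mathbb R^d$ be the convex hull of all $d$-dimensional vector-factorisations of $p^e$ (its vertices are exactly these vector-factorisations $(p^{\beta_1},\dots,p^{\beta_d})$ with $\beta\in\mathbb N^d$, $\sum_i\beta_i=e$). Let $S$ be a non-empty set of vertices of $\mathcal P(p^e,d)$, and define $m(S)=(m_1,\dots,m_d)$ and $M(S)=(M_1,\dots,M_d)$ by $m_i=\min_{(p^{\beta_1},\dots,p^{\beta_d})\in S}\beta_i$ and $M_i=\max_{(p^{\beta_1},\dots,p^{\beta_d})\in S}\beta_i$. If $M(S)-m(S)\in\{0,1\}^d$, then $S$ is contained in the set of vertices of a regular facet of $\mathcal P(p^e,d)$.
   Context: $\mathbb N=\{0,1,2,\dots\}$. A $d$-dimensional vector-factorisation of $N\geq1$ is a vector $(v_1,\dots,v_d)\in\mathbb N^d$ with $v_1\cdots v_d=N$. For $\lambda\in\{1,\dots,\min(e,d-1)\}$, $\mathcal R_\lambda(d,e)$ is the set of all $\alpha\in\mathbb N^d$ with $\min(\alpha_1,\dots,\alpha_d)=0$, $\max(\alpha_1,\dots,\alpha_d)\,d<e+\sum_i\alpha_i$ and $e+\sum_i\alpha_i\equiv\lambda\pmod d$; for such $\alpha$, $\mu(\alpha)$ is the integer with $\mu(\alpha)d+\lambda=e+\sum_i\alpha_i$. A regular facet of $\mathcal P(p^e,d)$ is a facet of the form $F_\alpha=\{x\in\mathcal P(p^e,d):\sum_{i=1}^dp^{\alpha_i}x_i=\lambda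 p^{\mu(\alpha)+1}+(d-\lambda)p^{\mu(\alpha)}\}$ for some $\lambda\in\{1,\dots,\min(e,d-1)\}$ and $\alpha\in\mathcal R_\lambda(d,e)$; equivalently, the convex hull of $\{(p^{\mu-\alpha_1+\epsilon_1},\dots,p^{\mu-\alpha_d+\epsilon_d}):\epsilon\in\{0,1\}^d,\sum_i\epsilon_i=\lambda\}$ with $\mu=\mu(\alpha)$. *)

theory Defs
  imports "HOL-Analysis.Analysis"
begin

text \<open>d-dimensional vector-factorisations of N, embedded in real^'d (d = CARD('d)).\<close>
definition vec_facts :: "nat \<Rightarrow> (real^'d) set" where
  "vec_facts N = {(\<chi> i. real (v i)) | v :: 'd \<Rightarrow> nat. (\<Prod>i\<in>UNIV. v i) = N}"

definition Ppoly :: "nat \<Rightarrow> (real^'d) set" where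
  "Ppoly N = convex hull (vec_facts N)"

definition pvec :: "nat \<Rightarrow> ('d \<Rightarrow> nat) \<Rightarrow> real^'d" where
  "pvec p b = (\<chi> i. real p ^ b i)"

definition Rset :: "nat \<Rightarrow> nat \<Rightarrow> ('d::finite \<Rightarrow> nat) set" where
  "Rset lam e = {\<alpha>. Min (range \<alpha>) = 0
      \<and> Max (range \<alpha>) * CARD('d) < e + (\<Sum>i\<in>UNIV. \<alpha> i)
      \<and> (e + (\<Sum>i\<in>UNIV. \<alpha> i)) mod CARD('d) = lam mod CARD('d)}"

text \<open>mu(alpha): the integer with mu*d + lambda = e + sum alpha.\<close>
definition mu :: "nat \<Rightarrow> nat \<Rightarrow> ('d::finite \<Rightarrow> nat) \<Rightarrow> nat" where
  "mu lam e \<alpha> = (e + (\<Sum>i\<in>UNIV. \<alpha> i) - lam) div CARD('d)"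

definition Falpha :: "nat \<Rightarrow> nat \<Rightarrow> nat \<Rightarrow> ('d::finite \<Rightarrow> nat) \<Rightarrow> (real^'d) set" where
  "Falpha p e lam \<alpha> = {x \<in> Ppoly (p ^ e).
      (\<Sum>i\<in>UNIV. real p ^ \<alpha> i * x $ i)
        = real lam * real p ^ (mu lam e \<alpha> + 1)
          + (real CARD('d) - real lam) * real p ^ (mu lam e \<alpha>)}"

definition regular_facet :: "nat \<Rightarrow> nat \<Rightarrow> (real^'d) set \<Rightarrow> bool" where
  "regular_facet p e F \<longleftrightarrow> F facet_of Ppoly (p ^ e) \<and>
     (\<exists>lam (\<alpha>::'d \<Rightarrow> nat). 1 \<le> lam \<and> lam \<le> min e (CARD('d) - 1)
        \<and> \<alpha> \<in> Rset lam e \<and> F = Falpha p e lam \<alpha>)"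

end

theory Submission
  imports Defs "HOL-Computational_Algebra.Primes"
begin

lemma bern_nat: fixes p :: nat assumes "p \<ge> 1"
  shows "real p ^ j \<ge> 1 + real j * (real p - 1)"
proof (induction j)
  case 0 then show ?case by simp
next
  case (Suc j)
  have "real p ^ Suc j = real p * real p ^ j" by simp
  also have "\<dots> \<ge> real p * (1 + real j * (real p - 1))"
    using Suc assms by (intro mult_left_mono) auto
  finally have h: "real p ^ Suc j \<ge> real p * (1 + real j * (real p - 1))" .
  have "real p * (1 + real j * (real p - 1)) = 1 + real (Suc j) * (real p - 1) + real j * ((real p - 1) * (real p - 1))"
    by (simp add: algebra_simps)
  moreover have "real j * ((real p - 1) * (real p - 1)) \<ge> 0" using assms by simp
  ultimately show ?case using h by linarith
qed

lemma bern_strict: fixes p :: nat assumes "p \<ge> 2" "j \<ge> 2"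
  shows "real p ^ j > 1 + real j * (real p - 1)"
proof -
  obtain i where j: "j = Suc i" "i \<ge> 1" using assms by (cases j) auto
  have "real p ^ j = real p * real p ^ i" using j by simp
  also have "\<dots> \<ge> real p * (1 + real i * (real p - 1))"
    using bern_nat[of p i] assms by (intro mult_left_mono) auto
  finally have "real p ^ j \<ge> real p * (1 + real i * (real p - 1))" .
  moreover have "real p * (1 + real i * (real p - 1)) > 1 + real j * (real p - 1)"
  proof -
    have "real p \<ge> 2" "real i \<ge> 1" using assms j by auto
    then have "(real p - 1) * (real i * (real p - 1)) > 0" by simp
    then show ?thesis using j by (simp add: algebra_simps)
  qed
  ultimately show ?thesis by linarith
qed

lemma secant: fixes p :: nat assumes "p \<ge> 2"
  shows "real p ^ k \<ge> real p ^ m + (real k - real m) * (real p - 1) * real p ^ m"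
proof (cases "m \<le> k")
  case True
  then obtain j where k: "k = m + j" using le_Suc_ex by blast
  have "real p ^ k = real p ^ m * real p ^ j" using k by (simp add: power_add)
  also have "\<dots> \<ge> real p ^ m * (1 + real j * (real p - 1))"
    using bern_nat[of p j] assms by (intro mult_left_mono) auto
  finally show ?thesis using k by (simp add: algebra_simps)
next
  case False
  have km: "real k - real m \<le> -1" "real p - 1 \<ge> 1" using False assms by auto
  have h: "(real k - real m) * (real p - 1) \<le> real k - real m"
    using mult_left_mono_neg[of 1 "real p - 1" "real k - real m"] km by simp
  then have "(real k - real m) * (real p - 1) \<le> -1" using km by linarith
  then have "(real k - real m) * (real p - 1) * real p ^ m \<le> -1 * real p ^ m"
    by (intro mult_right_mono) auto
  moreover have "real p ^ k \<ge> 0" by simp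
  ultimately show ?thesis by linarith
qed

lemma secant_strict: fixes p :: nat assumes "p \<ge> 2" "k \<noteq> m" "k \<noteq> m + 1"
  shows "real p ^ k > real p ^ m + (real k - real m) * (real p - 1) * real p ^ m"
proof (cases "m \<le> k")
  case True
  then obtain j where k: "k = m + j" using le_Suc_ex by blast
  have "j \<ge> 2" using k assms by auto
  have "real p ^ k = real p ^ m * real p ^ j" using k by (simp add: power_add)
  also have "\<dots> > real p ^ m * (1 + real j * (real p - 1))"
    using bern_strict[of p j] assms \<open>j \<ge> 2\<close> by (intro mult_strict_left_mono) auto
  finally show ?thesis using k by (simp add: algebra_simps)
next
  case False
  have km: "real k - real m \<le> -1" "real p - 1 \<ge> 1" using False assms by auto
  have h: "(real k - real m) * (real p - 1) \<le> real k - real m"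
    using mult_left_mono_neg[of 1 "real p - 1" "real k - real m"] km by simp
  then have "(real k - real m) * (real p - 1) \<le> -1" using km by linarith
  then have "(real k - real m) * (real p - 1) * real p ^ m \<le> -1 * real p ^ m"
    by (intro mult_right_mono) auto
  moreover have "real p ^ k > 0" using assms by simp
  ultimately show ?thesis by linarith
qed

lemma secant_sum_eq: fixes p :: nat and g :: "'d::finite \<Rightarrow> nat"
  assumes "sum g UNIV = CARD('d) * m + lam"
  shows "(\<Sum>i\<in>UNIV. real p ^ m + (real (g i) - real m) * (real p - 1) * real p ^ m)
     = real lam * real p ^ (m + 1) + (real CARD('d) - real lam) * real p ^ m"
proof -
  have s: "(\<Sum>i\<in>UNIV. real (g i)) = real CARD('d) * real m + real lam"
    using arg_cong[OF assms, of real] by (simp add: of_nat_sum)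
  have "(\<Sum>i\<in>UNIV. real p ^ m + (real (g i) - real m) * (real p - 1) * real p ^ m)
    = real CARD('d) * real p ^ m + ((\<Sum>i\<in>UNIV. real (g i)) - real CARD('d) * real m) * (real p - 1) * real p ^ m"
    by (simp add: sum.distrib sum_subtractf sum_distrib_right[symmetric] sum_distrib_left[symmetric] algebra_simps)
  also have "\<dots> = real lam * real p ^ (m + 1) + (real CARD('d) - real lam) * real p ^ m"
    using s by (simp add: algebra_simps)
  finally show ?thesis .
qed

lemma secant_sum: fixes p :: nat and g :: "'d::finite \<Rightarrow> nat"
  assumes "p \<ge> 2" "sum g UNIV = CARD('d) * m + lam"
  shows "(\<Sum>i\<in>UNIV. real p ^ g i) \<ge> real lam * real p ^ (m + 1) + (real CARD('d) - real lam) * real p ^ m"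
  using sum_mono[of UNIV "\<lambda>i. real p ^ m + (real (g i) - real m) * (real p - 1) * real p ^ m" "\<lambda>i. real p ^ g i"]
    secant[OF assms(1)] secant_sum_eq[OF assms(2), of p] by simp

lemma secant_sum_strict: fixes p :: nat and g :: "'d::finite \<Rightarrow> nat"
  assumes "p \<ge> 2" "sum g UNIV = CARD('d) * m + lam" "g j \<noteq> m" "g j \<noteq> m + 1"
  shows "(\<Sum>i\<in>UNIV. real p ^ g i) > real lam * real p ^ (m + 1) + (real CARD('d) - real lam) * real p ^ m"
proof -
  have "(\<Sum>i\<in>UNIV. real p ^ m + (real (g i) - real m) * (real p - 1) * real p ^ m) < (\<Sum>i\<in>UNIV. real p ^ g i)"
    by (rule sum_strict_mono_ex1) (use secant[OF assms(1)] secant_strict[OF assms(1,3,4)] in auto)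
  then show ?thesis using secant_sum_eq[OF assms(2), of p] by simp
qed

lemma pvec_in_vf: fixes p :: nat and b :: "'d::finite \<Rightarrow> nat"
  assumes "sum b UNIV = e"
  shows "pvec p b \<in> vec_facts (p ^ e)"
proof -
  have "(\<Prod>i\<in>UNIV. p ^ b i) = p ^ e" by (metis assms power_sum)
  then show ?thesis unfolding vec_facts_def pvec_def
    by (intro CollectI exI[of _ "\<lambda>i. p ^ b i"]) auto
qed

lemma vf_pvec: fixes p :: nat
  assumes "prime p" "x \<in> (vec_facts (p ^ e) :: (real^'d::finite) set)"
  shows "\<exists>b::'d \<Rightarrow> nat. x = pvec p b \<and> sum b UNIV = e"
proof -
  obtain v :: "'d \<Rightarrow> nat" where x: "x = (\<chi> i. real (v i))" and pr: "(\<Prod>i\<in>UNIV. v i) = p ^ e"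
    using assms(2) unfolding vec_facts_def by blast
  have "\<forall>i. \<exists>k. v i = p ^ k"
  proof
    fix i
    have "v i dvd p ^ e" using pr by (metis dvd_prodI finite UNIV_I)
    then show "\<exists>k. v i = p ^ k" using divides_primepow_nat[OF assms(1)] by blast
  qed
  then obtain b where b: "\<And>i. v i = p ^ b i" by metis
  have "p ^ sum b UNIV = p ^ e" using pr by (simp add: b power_sum)
  then have "sum b UNIV = e" using assms(1) prime_gt_1_nat power_inject_exp by blast
  moreover have "x = pvec p b" unfolding x pvec_def by (simp add: b)
  ultimately show ?thesis by blast
qed

lemma inner_pvec: fixes p :: nat and a b :: "'d::finite \<Rightarrow> nat"
  shows "(\<chi> i. real p ^ a i) \<bullet> pvec p b = (\<Sum>i\<in>UNIV. real p ^ (a i + b i))"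
  unfolding pvec_def inner_vec_def by (simp add: power_add)

lemma hull_ge: fixes p :: nat and a :: "'d::finite \<Rightarrow> nat"
  assumes "prime p" "e + sum a UNIV = CARD('d) * m + lam"
  shows "\<forall>x\<in>Ppoly (p ^ e). (\<chi> i. real p ^ a i) \<bullet> x \<ge> real lam * real p ^ (m + 1) + (real CARD('d) - real lam) * real p ^ m"
proof -
  have "vec_facts (p ^ e) \<subseteq> {x. (\<chi> i. real p ^ a i) \<bullet> x \<ge> real lam * real p ^ (m + 1) + (real CARD('d) - real lam) * real p ^ m}"
  proof
    fix x :: "real^'d" assume "x \<in> vec_facts (p ^ e)"
    then obtain b where x: "x = pvec p b" and sb: "sum b UNIV = e" using vf_pvec[OF assms(1)] by blast
    have "sum (\<lambda>i. a i + b i) UNIV = CARD('d) * m + lam" using sb assms(2) by (simp add: sum.distrib)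
    then show "x \<in> {x. (\<chi> i. real p ^ a i) \<bullet> x \<ge> real lam * real p ^ (m + 1) + (real CARD('d) - real lam) * real p ^ m}"
      using secant_sum[of p "\<lambda>i. a i + b i" m lam] prime_ge_2_nat[OF assms(1)] x by (auto simp: inner_pvec)
  qed
  then have "convex hull vec_facts (p ^ e) \<subseteq> {x. (\<chi> i. real p ^ a i) \<bullet> x \<ge> real lam * real p ^ (m + 1) + (real CARD('d) - real lam) * real p ^ m}"
    by (intro hull_minimal) (auto simp: convex_halfspace_ge)
  then show ?thesis unfolding Ppoly_def by blast
qed

lemma extreme_sub: "x extreme_point_of S \<Longrightarrow> x \<in> F \<Longrightarrow> F \<subseteq> S \<Longrightarrow> x extreme_point_of F"
  unfolding extreme_point_of_def by blast

lemma affine_sum_diffs: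
  fixes v :: "'a::real_vector"
  assumes "affine S" "v \<in> S" "finite I" "\<forall>i\<in>I. u i \<in> S \<and> w i \<in> S"
  shows "v + (\<Sum>i\<in>I. c i *\<^sub>R (u i - w i)) \<in> S"
  using assms(3,4)
proof (induction I rule: finite_induct)
  case empty then show ?case using assms(2) by simp
next
  case (insert j I)
  have "v + (\<Sum>i\<in>insert j I. c i *\<^sub>R (u i - w i)) = (v + (\<Sum>i\<in>I. c i *\<^sub>R (u i - w i))) + c j *\<^sub>R (u j - w j)"
    using insert by (simp add: algebra_simps)
  also have "\<dots> \<in> S" using insert assms(1) by (intro mem_affine_3_minus) auto
  finally show ?case .
qed

lemma sum_ind_card: fixes S :: "'d::finite set"
  shows "(\<Sum>j\<in>UNIV. (if j \<in> S then 1 else 0 :: nat)) = card S"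
  by (simp add: sum.If_cases)

lemma swap_set: fixes i k :: "'d::finite"
  assumes "i \<noteq> k" "lam \<le> CARD('d) - 1"
  shows "\<exists>A. A \<subseteq> UNIV - {i, k} \<and> card A = lam - 1"
proof -
  have "card (UNIV - {i, k} :: 'd set) = CARD('d) - 2" using assms(1)
    by (simp add: card_Diff_subset)
  then have "lam - 1 \<le> card (UNIV - {i, k} :: 'd set)" using assms(2) by simp
  then show ?thesis using obtain_subset_with_card_n by metis
qed

lemma core:
  fixes p e lam :: nat and m :: "'d::finite \<Rightarrow> nat"
  assumes pr: "prime p" and e2: "e \<ge> 2" and l1: "1 \<le> lam" and l2: "lam \<le> CARD('d) - 1"
    and sm: "sum m UNIV + lam = e"
  shows "\<exists>F. regular_facet p e F \<and>
     (\<forall>\<epsilon>. (\<forall>i. \<epsilon> i \<le> 1) \<and> sum \<epsilon> UNIV = lam \<longrightarrow> pvec p (\<lambda>i. m i + \<epsilon> i) \<in> F)"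
proof -
  define d where "d = CARD('d)"
  have d2: "d \<ge> 2" using l1 l2 d_def by linarith
  have p2: "p \<ge> 2" using pr prime_ge_2_nat by blast
  define \<mu> where "\<mu> = Max (range m)"
  define \<alpha> where "\<alpha> = (\<lambda>i. \<mu> - m i)"
  have mle: "m i \<le> \<mu>" for i unfolding \<mu>_def by simp
  have "Max (range m) \<in> range m" by (rule Max_in) auto
  then obtain i0 where i0: "m i0 = \<mu>" unfolding \<mu>_def by (metis rangeE)
  have am: "\<alpha> i + m i = \<mu>" for i using mle[of i] \<alpha>_def by simp
  have sa: "sum \<alpha> UNIV + sum m UNIV = d * \<mu>"
    unfolding sum.distrib[symmetric] am d_def by simp
  have tot: "e + sum \<alpha> UNIV = d * \<mu> + lam" using sa sm by linarith
  define a :: "real^'d" where "a = (\<chi> i. real p ^ \<alpha> i)"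
  define b where "b = real lam * real p ^ (\<mu> + 1) + (real CARD('d) - real lam) * real p ^ \<mu>"
  have mu: "mu lam e \<alpha> = \<mu>" unfolding mu_def tot d_def[symmetric] using d2 by simp
  define F where "F = Falpha p e lam \<alpha>"
  have Fdef: "F = Ppoly (p ^ e) \<inter> {x. a \<bullet> x = b}"
    unfolding F_def Falpha_def mu a_def b_def inner_vec_def by auto
  have R: "\<alpha> \<in> Rset lam e"
  proof -
    have "Min (range \<alpha>) = 0" using i0 \<alpha>_def by (intro Min_eqI) auto
    moreover have "Max (range \<alpha>) * d < e + sum \<alpha> UNIV"
    proof -
      have "Max (range \<alpha>) \<le> \<mu>" using \<alpha>_def by simp
      then have h: "Max (range \<alpha>) * d \<le> \<mu> * d" by (rule mult_right_mono) simp
      have "\<mu> * d = d * \<mu>" by simp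
      then show ?thesis using h tot l1 by linarith
    qed
    moreover have "(e + sum \<alpha> UNIV) mod d = lam mod d" using tot by simp
    ultimately show ?thesis unfolding Rset_def d_def by simp
  qed
  have hge: "\<forall>x\<in>Ppoly (p ^ e). a \<bullet> x \<ge> b"
    using hull_ge[where a=\<alpha> and m=\<mu> and lam=lam and e=e, OF pr] tot d_def a_def b_def by simp
  have cvx: "convex (Ppoly (p ^ e) :: (real^'d) set)" unfolding Ppoly_def by simp
  have face: "F face_of Ppoly (p ^ e)"
    unfolding Fdef using cvx hge by (intro face_of_Int_supporting_hyperplane_ge) auto
  have vert: "pvec p (\<lambda>i. m i + \<epsilon> i) \<in> F" if e1: "\<forall>i. \<epsilon> i \<le> 1" and es: "sum \<epsilon> UNIV = lam" for \<epsilon>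
  proof -
    have "sum (\<lambda>i. m i + \<epsilon> i) UNIV = e" using es sm by (simp add: sum.distrib)
    then have inP: "pvec p (\<lambda>i. m i + \<epsilon> i) \<in> Ppoly (p ^ e)"
      unfolding Ppoly_def by (intro hull_inc pvec_in_vf)
    have g: "sum (\<lambda>i. \<mu> + \<epsilon> i) UNIV = CARD('d) * \<mu> + lam" using es by (simp add: sum.distrib)
    have "a \<bullet> pvec p (\<lambda>i. m i + \<epsilon> i) = (\<Sum>i\<in>UNIV. real p ^ (\<mu> + \<epsilon> i))"
      unfolding a_def inner_pvec using am by (simp add: add.assoc[symmetric])
    also have "\<dots> = (\<Sum>i\<in>UNIV. real p ^ \<mu> + (real (\<mu> + \<epsilon> i) - real \<mu>) * (real p - 1) * real p ^ \<mu>)"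
    proof (rule sum.cong)
      fix i show "real p ^ (\<mu> + \<epsilon> i) = real p ^ \<mu> + (real (\<mu> + \<epsilon> i) - real \<mu>) * (real p - 1) * real p ^ \<mu>"
        using e1[rule_format, of i] by (cases "\<epsilon> i") (auto simp: algebra_simps)
    qed simp
    also have "\<dots> = b" unfolding b_def by (rule secant_sum_eq[OF g])
    finally show ?thesis using inP Fdef by auto
  qed
  have swap: "\<exists>u w. u \<in> F \<and> w \<in> F \<and> (\<forall>j. (u - w) $ j = (if j = i then (real p - 1) * real p ^ m i
        else if j = k then - ((real p - 1) * real p ^ m k) else 0))" if ik: "i \<noteq> k" for i k
  proof -
    obtain A where A: "A \<subseteq> UNIV - {i,k}" "card A = lam - 1" using swap_set[OF ik l2] by blast
    have fA: "finite A" by simp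
    define eu where "eu = (\<lambda>j. if j \<in> insert i A then 1 else 0::nat)"
    define ew where "ew = (\<lambda>j. if j \<in> insert k A then 1 else 0::nat)"
    have "i \<notin> A" "k \<notin> A" using A by auto
    then have "sum eu UNIV = lam" "sum ew UNIV = lam"
      unfolding eu_def ew_def sum_ind_card using A(2) l1 fA by auto
    then have u: "pvec p (\<lambda>j. m j + eu j) \<in> F" and w: "pvec p (\<lambda>j. m j + ew j) \<in> F"
      by (auto intro!: vert simp: eu_def ew_def)
    have "(pvec p (\<lambda>j. m j + eu j) - pvec p (\<lambda>j. m j + ew j)) $ j = (if j = i then (real p - 1) * real p ^ m i
        else if j = k then - ((real p - 1) * real p ^ m k) else 0)" for j
      using \<open>i \<notin> A\<close> \<open>k \<notin> A\<close> ik unfolding pvec_def eu_def ew_def by (auto simp: algebra_simps)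
    then show ?thesis using u w by blast
  qed
  have "\<exists>k. k \<noteq> i0"
  proof (rule ccontr)
    assume "\<not> (\<exists>k. k \<noteq> i0)"
    then have "(UNIV :: 'd set) = {i0}" by auto
    then have "card (UNIV :: 'd set) = Suc 0" using card_1_singleton_iff by blast
    then show False using d2 d_def by simp
  qed
  then obtain k0 where k0: "k0 \<noteq> i0" by blast
  have "\<forall>i\<in>UNIV - {i0}. \<exists>u w. u \<in> F \<and> w \<in> F \<and> (\<forall>j. (u - w) $ j = (if j = i then (real p - 1) * real p ^ m i
        else if j = i0 then - ((real p - 1) * real p ^ m i0) else 0))" using swap by blast
  then obtain U W where UW: "\<And>i. i \<in> UNIV - {i0} \<Longrightarrow> U i \<in> F \<and> W i \<in> F \<and> (\<forall>j. (U i - W i) $ j = (if j = i then (real p - 1) * real p ^ m i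
        else if j = i0 then - ((real p - 1) * real p ^ m i0) else 0))" by metis
  have v0: "U k0 \<in> F" using UW k0 by blast
  have Fne: "F \<noteq> {}" using v0 by blast
  have q1: "real p - 1 > 0" using p2 by simp
  have pw: "real p ^ \<alpha> i * real p ^ m i = real p ^ \<mu>" for i using am[of i] by (simp add: power_add[symmetric])
  have hyp: "{x. a \<bullet> x = b} \<subseteq> affine hull F"
  proof
    fix x assume x: "x \<in> {x. a \<bullet> x = b}"
    define y where "y = x - U k0"
    have ay: "a \<bullet> y = 0" using x v0 Fdef unfolding y_def by (simp add: inner_diff_right)
    then have ay': "(\<Sum>i\<in>UNIV. real p ^ \<alpha> i * y $ i) = 0" unfolding a_def inner_vec_def by simp
    have spl: "(\<Sum>i\<in>UNIV. real p ^ \<alpha> i * y $ i) = real p ^ \<alpha> i0 * y $ i0 + (\<Sum>i\<in>UNIV - {i0}. real p ^ \<alpha> i * y $ i)"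
      by (simp add: sum.remove)
    define c where "c i = y $ i * real p ^ \<alpha> i / ((real p - 1) * real p ^ \<mu>)" for i
    have eq: "y = (\<Sum>i\<in>UNIV - {i0}. c i *\<^sub>R (U i - W i))"
    proof (subst vec_eq_iff, intro allI)
      fix j
      have "(\<Sum>i\<in>UNIV - {i0}. c i *\<^sub>R (U i - W i)) $ j = (\<Sum>i\<in>UNIV - {i0}. c i * (if j = i then (real p - 1) * real p ^ m i
        else if j = i0 then - ((real p - 1) * real p ^ m i0) else 0))"
        unfolding sum_component using UW by (intro sum.cong) auto
      also have "\<dots> = y $ j"
      proof (cases "j = i0")
        case True
        have "(\<Sum>i\<in>UNIV - {i0}. c i * (if j = i then (real p - 1) * real p ^ m i
          else if j = i0 then - ((real p - 1) * real p ^ m i0) else 0))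
          = (\<Sum>i\<in>UNIV - {i0}. c i * (- ((real p - 1) * real p ^ m i0)))"
          using True by (intro sum.cong) auto
        also have "\<dots> = - ((real p - 1) * real p ^ m i0) * (\<Sum>i\<in>UNIV - {i0}. real p ^ \<alpha> i * y $ i) / ((real p - 1) * real p ^ \<mu>)"
          unfolding c_def by (simp add: sum_distrib_left sum_divide_distrib algebra_simps)
        also have "\<dots> = ((real p - 1) * real p ^ m i0) * (real p ^ \<alpha> i0 * y $ i0) / ((real p - 1) * real p ^ \<mu>)"
        proof -
          have "(\<Sum>i\<in>UNIV - {i0}. real p ^ \<alpha> i * y $ i) = - (real p ^ \<alpha> i0 * y $ i0)" using ay' spl by linarith
          then show ?thesis by simp
        qed
        also have "\<dots> = y $ j" using True q1 pw[of i0] by (simp add: field_simps)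
        finally show ?thesis .
      next
        case False
        have "(\<Sum>i\<in>UNIV - {i0}. c i * (if j = i then (real p - 1) * real p ^ m i
          else if j = i0 then - ((real p - 1) * real p ^ m i0) else 0))
          = (\<Sum>i\<in>UNIV - {i0}. (if i = j then c j * ((real p - 1) * real p ^ m j) else 0))"
          using False by (intro sum.cong) auto
        also have "\<dots> = c j * ((real p - 1) * real p ^ m j)" using False by (simp add: sum.delta')
        also have "\<dots> = y $ j" unfolding c_def using q1 pw[of j] by (simp add: field_simps)
        finally show ?thesis .
      qed
      finally show "y $ j = (\<Sum>i\<in>UNIV - {i0}. c i *\<^sub>R (U i - W i)) $ j" by simp
    qed
    have "U k0 + (\<Sum>i\<in>UNIV - {i0}. c i *\<^sub>R (U i - W i)) \<in> affine hull F"
      using UW v0 by (intro affine_sum_diffs) (auto intro: hull_inc)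
    then show "x \<in> affine hull F" using eq unfolding y_def by (metis add.commute diff_add_cancel)
  qed
  have anz: "a \<noteq> 0"
  proof
    assume "a = 0" then have "a $ i0 = 0" by simp
    then show False unfolding a_def using p2 by simp
  qed
  have dimF: "aff_dim F \<ge> int CARD('d) - 1"
    using aff_dim_subset[OF hyp] aff_dim_hyperplane[OF anz, of b] by simp
  have neq: "F \<noteq> Ppoly (p ^ e)"
  proof -
    obtain j t where jt: "\<alpha> t + (if t = j then e else 0) \<noteq> \<mu>" "\<alpha> t + (if t = j then e else 0) \<noteq> \<mu> + 1"
    proof (cases "\<exists>i. m i \<ge> 1")
      case True
      then obtain i where i: "m i \<ge> 1" by blast
      have "\<exists>j. j \<noteq> i"
      proof (rule ccontr)
        assume "\<not> (\<exists>j. j \<noteq> i)"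
        then have "(UNIV :: 'd set) = {i}" by auto
        then have "card (UNIV :: 'd set) = Suc 0" using card_1_singleton_iff by blast
        then show False using d2 d_def by simp
      qed
      then obtain j where "j \<noteq> i" by blast
      then show ?thesis using that[of i j] i mle[of i] \<alpha>_def by auto
    next
      case False
      then have "m i0 = 0" by (metis less_one not_le)
      then show ?thesis using that[of i0 i0] e2 i0 \<alpha>_def by auto
    qed
    define \<beta> where "\<beta> = (\<lambda>l. if l = j then e else 0)"
    have sb: "sum \<beta> UNIV = e" unfolding \<beta>_def by simp
    have g: "sum (\<lambda>i. \<alpha> i + \<beta> i) UNIV = CARD('d) * \<mu> + lam" using tot sb d_def by (simp add: sum.distrib)
    have "a \<bullet> pvec p \<beta> > b"
      unfolding a_def inner_pvec b_def
      by (rule secant_sum_strict[OF p2 g, of t]) (use jt \<beta>_def in auto)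
    moreover have "pvec p \<beta> \<in> Ppoly (p ^ e)" unfolding Ppoly_def by (intro hull_inc pvec_in_vf sb)
    ultimately show ?thesis using Fdef by auto
  qed
  have lt: "aff_dim F < aff_dim (Ppoly (p ^ e) :: (real^'d) set)" by (rule face_of_aff_dim_lt[OF cvx face neq])
  have le: "aff_dim (Ppoly (p ^ e) :: (real^'d) set) \<le> int CARD('d)" using aff_dim_le_DIM[of "Ppoly (p ^ e) :: (real^'d) set"] by simp
  have facet: "F facet_of Ppoly (p ^ e)" unfolding facet_of_def using face Fne lt le dimF by linarith
  have "regular_facet p e F" unfolding regular_facet_def
    using facet l1 l2 sm R F_def by auto
  then show ?thesis using vert by blast
qed

lemma pvec_inj: fixes p :: nat assumes "p \<ge> 2" "pvec p b = pvec p b'" shows "b = b'"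
proof
  fix i
  have "real p ^ b i = real p ^ b' i" using assms(2) unfolding pvec_def by (metis vec_lambda_beta)
  then show "b i = b' i" using assms(1) power_inject_exp[of "real p"] by simp
qed

lemma rf_extreme:
  assumes "regular_facet p e F" "pvec p b \<in> F" "pvec p b extreme_point_of Ppoly (p ^ e)"
  shows "pvec p b extreme_point_of F"
proof -
  have "F \<subseteq> Ppoly (p ^ e)" using assms(1) unfolding regular_facet_def facet_of_def
    using face_of_imp_subset by blast
  then show ?thesis using extreme_sub assms(2,3) by blast
qed

theorem lemma5p2:
  fixes p e :: nat and B :: "('d::finite \<Rightarrow> nat) set"
  assumes "prime p" and "e \<ge> 2" and "CARD('d) \<ge> 2"
    and "B \<noteq> {}"
    and "\<forall>b\<in>B. pvec p b extreme_point_of Ppoly (p ^ e)"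
    and "\<forall>i. Max ((\<lambda>b. b i) ` B) - Min ((\<lambda>b. b i) ` B) \<le> 1"
  shows "\<exists>F. regular_facet p e F \<and> pvec p ` B \<subseteq> {v. v extreme_point_of F}"
proof -
  note pr = assms(1) and e2 = assms(2) and d2 = assms(3) and Bne = assms(4) and ext = assms(5) and mx = assms(6)
  have p2: "p \<ge> 2" using pr prime_ge_2_nat by blast
  have sumB: "sum b UNIV = e" if "b \<in> B" for b
  proof -
    have "pvec p b \<in> vec_facts (p ^ e)" using ext that unfolding Ppoly_def
      using extreme_point_of_convex_hull by blast
    then obtain b' :: "'d \<Rightarrow> nat" where "pvec p b = pvec p b'" "sum b' UNIV = e" using vf_pvec[OF pr] by blast
    then show ?thesis using pvec_inj[OF p2] by metis
  qed
  have fin: "finite ((\<lambda>b. b i) ` B)" for i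
  proof (rule finite_subset)
    show "(\<lambda>b. b i) ` B \<subseteq> {0..e}"
    proof
      fix x assume "x \<in> (\<lambda>b. b i) ` B"
      then obtain b where b: "b \<in> B" "x = b i" by blast
      have "b i \<le> sum b UNIV" by (rule member_le_sum) auto
      then show "x \<in> {0..e}" using b sumB by auto
    qed
  qed simp
  define m where "m i = Min ((\<lambda>b. b i) ` B)" for i
  have mb: "m i \<le> b i" "b i \<le> m i + 1" if "b \<in> B" for b i
  proof -
    show "m i \<le> b i" unfolding m_def using fin that by (intro Min_le) auto
    have "b i \<le> Max ((\<lambda>b. b i) ` B)" using fin that by (intro Max_ge) auto
    then show "b i \<le> m i + 1" using mx[rule_format, of i] unfolding m_def by linarith
  qed
  define L where "L = e - sum m UNIV"
  have decomp: "sum (\<lambda>i. b i - m i) UNIV = L \<and> (\<forall>i. b i - m i \<le> 1) \<and> b = (\<lambda>i. m i + (b i - m i)) \<and> sum m UNIV \<le> e"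
    if "b \<in> B" for b
  proof -
    have "sum (\<lambda>i. m i + (b i - m i)) UNIV = e" using sumB[OF that] mb[OF that] by simp
    then have "sum m UNIV + sum (\<lambda>i. b i - m i) UNIV = e" by (simp add: sum.distrib)
    moreover have "\<forall>i. b i - m i \<le> 1" using mb[OF that] by (metis add.commute le_diff_conv)
    moreover have "b = (\<lambda>i. m i + (b i - m i))" using mb[OF that] by auto
    ultimately show ?thesis unfolding L_def by auto
  qed
  obtain b0 where b0: "b0 \<in> B" using Bne by blast
  show ?thesis
  proof (cases "1 \<le> L \<and> L \<le> CARD('d) - 1")
    case True
    have "sum m UNIV + L = e" using decomp[OF b0] unfolding L_def by simp
    then obtain F where F: "regular_facet p e F"
      "\<forall>\<epsilon>. (\<forall>i. \<epsilon> i \<le> 1) \<and> sum \<epsilon> UNIV = L \<longrightarrow> pvec p (\<lambda>i. m i + \<epsilon> i) \<in> F"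
      using core[OF pr e2, of L m] True by blast
    have "pvec p b extreme_point_of F" if "b \<in> B" for b
    proof -
      have "pvec p b \<in> F" using F(2) decomp[OF that] by metis
      then show ?thesis using rf_extreme F(1) ext that by blast
    qed
    then show ?thesis using F(1) by blast
  next
    case False
    have single: "b = b0" if "b \<in> B" for b
    proof (cases "L = 0")
      case True
      have hm: "b i = m i" if "b \<in> B" for b i
      proof -
        have "sum (\<lambda>i. b i - m i) UNIV = 0" using decomp[OF that] True by simp
        then have "b i - m i = 0" by simp
        then show ?thesis using mb[OF that, of i] by simp
      qed
      show ?thesis
      proof
        fix i show "b i = b0 i" using hm[OF that, of i] hm[OF b0, of i] by simp
      qed
    next
      case LF: False
      then have Ld: "L \<ge> CARD('d)" using False by auto
      have hm: "b i = m i + 1" if "b \<in> B" for b i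
      proof (rule ccontr)
        assume "b i \<noteq> m i + 1"
        then have z: "b i - m i = 0" using mb[OF that, of i] by simp
        have "sum (\<lambda>i. b i - m i) UNIV = (b i - m i) + sum (\<lambda>i. b i - m i) (UNIV - {i})"
          by (simp add: sum.remove)
        also have "\<dots> \<le> 0 + sum (\<lambda>i. 1) (UNIV - {i})"
          using z decomp[OF that] by (intro add_mono sum_mono) auto
        also have "\<dots> = CARD('d) - 1" by (simp add: card_Diff_subset)
        finally show False using decomp[OF that] Ld d2 by linarith
      qed
      show ?thesis
      proof
        fix i show "b i = b0 i" using hm[OF that, of i] hm[OF b0, of i] by simp
      qed
    qed
    have "\<exists>j. b0 j \<ge> 1"
    proof (rule ccontr)
      assume "\<not> (\<exists>j. b0 j \<ge> 1)"
      then have "\<forall>j. b0 j = 0" by (metis less_one not_le)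
      then show False using sumB[OF b0] e2 by simp
    qed
    then obtain j where j: "b0 j \<ge> 1" by blast
    define m' where "m' = (\<lambda>i. b0 i - (if i = j then 1 else 0))"
    define \<epsilon>' where "\<epsilon>' = (\<lambda>i. if i = j then 1 else 0::nat)"
    have bm: "b0 = (\<lambda>i. m' i + \<epsilon>' i)" using j unfolding m'_def \<epsilon>'_def by auto
    have se: "sum \<epsilon>' UNIV = 1" unfolding \<epsilon>'_def by simp
    have "sum m' UNIV + 1 = e" using sumB[OF b0] se unfolding bm by (simp add: sum.distrib)
    moreover have "1 \<le> CARD('d) - 1" using d2 by simp
    ultimately have "\<exists>F. regular_facet p e F \<and>
      (\<forall>\<epsilon>. (\<forall>i. \<epsilon> i \<le> 1) \<and> sum \<epsilon> UNIV = 1 \<longrightarrow> pvec p (\<lambda>i. m' i + \<epsilon> i) \<in> F)"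
      by (intro core[OF pr e2]) auto
    then obtain F where F: "regular_facet p e F"
      "\<forall>\<epsilon>. (\<forall>i. \<epsilon> i \<le> 1) \<and> sum \<epsilon> UNIV = 1 \<longrightarrow> pvec p (\<lambda>i. m' i + \<epsilon> i) \<in> F"
      by blast
    have "\<forall>i. \<epsilon>' i \<le> 1" unfolding \<epsilon>'_def by simp
    then have "pvec p (\<lambda>i. m' i + \<epsilon>' i) \<in> F" using F(2) se by blast
    then have "pvec p b0 \<in> F" using bm by simp
    then have "pvec p b0 extreme_point_of F" using rf_extreme F(1) ext b0 by blast
    then show ?thesis using F(1) single by blast
  qed
qed

end
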